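(* Let $(\mathrm{Block},\mathrm{Gd},\mathrm{Bd})$ be a critical tuple given as input to the Gap algorithm, let $i\in\mathbb{Z}$ with $\mathrm{Block}(i)\neq\emptyset$, and let $P$ be the set of selected elements at any stage of an arbitrary execution of the Gap algorithm. If $e\in B_{\mathcal{U}\setminus F}(\mathrm{Block}(i))\cap\mathrm{span}(B_F(\mathrm{Gd}(i)))$, then $$e\notin\mathrm{span}\big(P\cup B_F(\mathrm{Bd}(i))\big)\iff e\notin\mathrm{span}\Big(\big(P\cap B_{\mathcal{U}\setminus F}(\mathrm{Block}(i))\big)\cup B_F(\mathrm{Bd}(i))\Big).$$
   Context: $M=(\mathcal{U},\mathcal{I})$ is a matroid; $\mathrm{rank}(X)=\max\{|X'|:X'\subseteq X,X'\in\mathcal{I}\}$, $\mathrm{span}(X)=\{e:\mathrm{rank}(X\cup\{e\})=\mathrm{rank}(X)\}$. Standing assumption: elements of rank $0$ have value $0$ and every element of positive value has value $2^i$ for some $i\in\mathbb{Z}$. For $X\subseteq\mathcal{U}$: $B_X(i)=\{e\in X:\mathrm{val}(e)=2^i\}$, $B_X(I)=\bigcup_{i\in I}B_X(i)$. Logarithms base 2. $F\subseteq\mathcal{U}$ is the set of elements revealed in a first (observation) stage; afterwards the elements of $\mathcal{U}\setminus F$ are revealed one by one. Critical tuple: $(\mathrm{Block},\mathrm{Gd},\mathrm{Bd})$ where $\mathrm{Block},\mathrm{Gd},\mathrm{Bd}$ are maps from $\mathbb{Z}$ to subsets of $\mathbb{Z}$ such that for all $i\ge j$ with $\mathrm{Block}(i),\mathrm{Block}(j)$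 nonempty: (1) $i\in\mathrm{Block}(i)$; (2) if $i>j$ then either $\mathrm{Block}(i)=\mathrm{Block}(j)$ or $\min\mathrm{Block}(i)>\max\mathrm{Block}(j)$; (3) if $\mathrm{Block}(i)=\mathrm{Block}(j)$ then $\mathrm{Gd}(i)=\mathrm{Gd}(j)$ and $\mathrm{Bd}(i)=\mathrm{Bd}(j)$; (4) $\mathrm{Block}(i)\cup\mathrm{Bd}(i)\subseteq\mathrm{Gd}(i)$; (5) if $\min\mathrm{Block}(i)>\max\mathrm{Block}(j)$ then $\mathrm{Bd}(i)\subseteq\mathrm{Gd}(i)\subseteq\mathrm{Bd}(j)\subseteq\mathrm{Gd}(j)$; (6) $\max\mathrm{Block}(i)<\min\mathrm{Bd}(i)$. Gap algorithm with input a critical tuple: start with $P=\emptyset$; immediately after each $e\in\mathcal{U}\setminus F$ is revealed (elements of value $0$ are ignored), let $\ell=\log\mathrm{val}(e)$; if $\mathrm{Block}(\ell)\neq\emptyset$, $e\in\mathrm{span}(B_F(\mathrm{Gd}(\ell)))$ and $e\notin\mathrm{span}(P\cup B_F(\mathrm{Bd}(\ell)))$, then add $e$ to $P$. Output $P$. *)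

theory Defs
  imports Complex_Main
begin

definition matroid :: "'a set \<Rightarrow> 'a set set \<Rightarrow> bool" where
  "matroid U I \<longleftrightarrow> finite U \<and> (\<forall>X\<in>I. X \<subseteq> U) \<and> {} \<in> I \<and>
     (\<forall>X Y. Y \<in> I \<and> X \<subseteq> Y \<longrightarrow> X \<in> I) \<and>
     (\<forall>X Y. X \<in> I \<and> Y \<in> I \<and> card X < card Y \<longrightarrow> (\<exists>y\<in>Y - X. insert y X \<in> I))"

definition mrank :: "'a set set \<Rightarrow> 'a set \<Rightarrow> nat" where
  "mrank I X = Max {card Y | Y. Y \<subseteq> X \<and> Y \<in> I}"

definition mspan :: "'a set \<Rightarrow> 'a set set \<Rightarrow> 'a set \<Rightarrow> 'a set" where
  "mspan U I X = {e \<in> U. mrank I (insert e X) = mrank I X}"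

(* B_X(S) = elements of X whose value is 2^j for some j in S *)
definition Bset :: "('a \<Rightarrow> real) \<Rightarrow> 'a set \<Rightarrow> int set \<Rightarrow> 'a set" where
  "Bset val X S = {e \<in> X. \<exists>j\<in>S. val e = 2 powr (real_of_int j)}"

(* log val(e), an integer under the standing assumption *)
definition lvl :: "('a \<Rightarrow> real) \<Rightarrow> 'a \<Rightarrow> int" where
  "lvl val e = \<lfloor>log 2 (val e)\<rfloor>"

definition critical_tuple :: "(int \<Rightarrow> int set) \<Rightarrow> (int \<Rightarrow> int set) \<Rightarrow> (int \<Rightarrow> int set) \<Rightarrow> bool" where
  "critical_tuple Block Gd Bd \<longleftrightarrow>
    (\<forall>i j. i \<ge> j \<and> Block i \<noteq> {} \<and> Block j \<noteq> {} \<longrightarrow>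
       i \<in> Block i \<and>
       (i > j \<longrightarrow> Block i = Block j \<or> (\<forall>a\<in>Block i. \<forall>b\<in>Block j. a > b)) \<and>
       (Block i = Block j \<longrightarrow> Gd i = Gd j \<and> Bd i = Bd j) \<and>
       Block i \<union> Bd i \<subseteq> Gd i \<and>
       ((\<forall>a\<in>Block i. \<forall>b\<in>Block j. a > b) \<longrightarrow> Bd i \<subseteq> Gd i \<and> Gd i \<subseteq> Bd j \<and> Bd j \<subseteq> Gd j) \<and>
       (\<forall>a\<in>Block i. \<forall>b\<in>Bd i. a < b))"

definition gap_accepts :: "'a set \<Rightarrow> 'a set set \<Rightarrow> 'a set \<Rightarrow> ('a \<Rightarrow> real) \<Rightarrow>
    (int \<Rightarrow> int set) \<Rightarrow> (int \<Rightarrow> int set) \<Rightarrow> (int \<Rightarrow> int set) \<Rightarrow> 'a set \<Rightarrow> 'a \<Rightarrow> bool" where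
  "gap_accepts U I F val Block Gd Bd P e \<longleftrightarrow>
     val e \<noteq> 0 \<and> Block (lvl val e) \<noteq> {} \<and>
     e \<in> mspan U I (Bset val F (Gd (lvl val e))) \<and>
     e \<notin> mspan U I (P \<union> Bset val F (Bd (lvl val e)))"

fun gap_run :: "'a set \<Rightarrow> 'a set set \<Rightarrow> 'a set \<Rightarrow> ('a \<Rightarrow> real) \<Rightarrow>
    (int \<Rightarrow> int set) \<Rightarrow> (int \<Rightarrow> int set) \<Rightarrow> (int \<Rightarrow> int set) \<Rightarrow> 'a set \<Rightarrow> 'a list \<Rightarrow> 'a set" where
  "gap_run U I F val Block Gd Bd P [] = P"
| "gap_run U I F val Block Gd Bd P (e # es) =
     gap_run U I F val Block Gd Bd
       (if gap_accepts U I F val Block Gd Bd P e then insert e P else P) es"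

end

theory Submission
  imports Defs
begin

locale mat =
  fixes U :: "'a set" and I :: "'a set set"
  assumes M: "matroid U I"
begin

abbreviation r where "r \<equiv> mrank I"
abbreviation sp where "sp \<equiv> mspan U I"

lemma finU: "finite U" using M by (simp add: matroid_def)
lemma indep_sub: "Y \<in> I \<Longrightarrow> Y \<subseteq> U" using M by (simp add: matroid_def)
lemma indep_fin: "Y \<in> I \<Longrightarrow> finite Y" using indep_sub finU finite_subset by blast
lemma empty_indep: "{} \<in> I" using M by (simp add: matroid_def)
lemma aug: "X \<in> I \<Longrightarrow> Y \<in> I \<Longrightarrow> card X < card Y \<Longrightarrow> \<exists>y\<in>Y - X. insert y X \<in> I"
  using M unfolding matroid_def by blast
lemma down: "Y \<in> I \<Longrightarrow> X \<subseteq> Y \<Longrightarrow> X \<in> I"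
  using M unfolding matroid_def by blast

lemma cset_fin: "finite {card Y | Y. Y \<subseteq> X \<and> Y \<in> I}"
proof -
  have "{card Y | Y. Y \<subseteq> X \<and> Y \<in> I} \<subseteq> {..card U}"
    using indep_sub finU card_mono by fastforce
  thus ?thesis using finite_subset by blast
qed

lemma cset_ne: "{card Y | Y. Y \<subseteq> X \<and> Y \<in> I} \<noteq> {}"
  using empty_indep by blast

lemma r_le: "Y \<subseteq> X \<Longrightarrow> Y \<in> I \<Longrightarrow> card Y \<le> r X"
  unfolding mrank_def using cset_fin by (intro Max_ge) auto

lemma r_basis: "\<exists>B. B \<subseteq> X \<and> B \<in> I \<and> card B = r X"
proof -
  have "r X \<in> {card Y | Y. Y \<subseteq> X \<and> Y \<in> I}"
    unfolding mrank_def using cset_fin cset_ne by (rule Max_in)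
  thus ?thesis by auto
qed

lemma r_mono: "X \<subseteq> Y \<Longrightarrow> r X \<le> r Y"
  using r_basis[of X] r_le by (metis order_trans)

lemma extend: "Y \<subseteq> X \<Longrightarrow> Y \<in> I \<Longrightarrow> \<exists>B. Y \<subseteq> B \<and> B \<subseteq> X \<and> B \<in> I \<and> card B = r X"
proof (induction "r X - card Y" arbitrary: Y rule: less_induct)
  case less
  have le: "card Y \<le> r X" using r_le less.prems by blast
  show ?case
  proof (cases "card Y = r X")
    case True then show ?thesis using less.prems by blast
  next
    case False
    then have lt: "card Y < r X" using le by simp
    obtain Z where Z: "Z \<subseteq> X" "Z \<in> I" "card Z = r X" using r_basis by blast
    obtain z where z: "z \<in> Z - Y" "insert z Y \<in> I" using aug[OF less.prems(2) Z(2)] lt Z(3) by auto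
    have fY: "finite Y" using indep_fin less.prems by blast
    have c: "card (insert z Y) = card Y + 1" using z fY by simp
    have "r X - card (insert z Y) < r X - card Y" using c lt by simp
    then obtain B where "insert z Y \<subseteq> B" "B \<subseteq> X" "B \<in> I" "card B = r X"
      using less.hyps[of "insert z Y"] z Z less.prems by blast
    then show ?thesis by blast
  qed
qed

lemma submod: "r (A \<union> B) + r (A \<inter> B) \<le> r A + r B"
proof -
  obtain C where C: "C \<subseteq> A \<inter> B" "C \<in> I" "card C = r (A \<inter> B)" using r_basis by blast
  obtain D where D: "C \<subseteq> D" "D \<subseteq> A \<union> B" "D \<in> I" "card D = r (A \<union> B)"
    using extend[of C "A \<union> B"] C by blast
  have fD: "finite D" using indep_fin D by blast
  have a: "card (D \<inter> A) \<le> r A" by (rule r_le[OF _ down[OF D(3)]]) auto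
  have b: "card (D \<inter> B) \<le> r B" by (rule r_le[OF _ down[OF D(3)]]) auto
  have "card (D \<inter> A) + card (D \<inter> B) = card ((D \<inter> A) \<union> (D \<inter> B)) + card ((D \<inter> A) \<inter> (D \<inter> B))"
    by (rule card_Un_Int) (use fD in auto)
  moreover have e2: "(D \<inter> A) \<union> (D \<inter> B) = D" using D by blast
  ultimately have e3: "card (D \<inter> A) + card (D \<inter> B) = card D + card ((D \<inter> A) \<inter> (D \<inter> B))" by simp
  moreover have "card C \<le> card ((D \<inter> A) \<inter> (D \<inter> B))"
    using C D fD by (intro card_mono) auto
  then show ?thesis using a b e3 C(3) D(4) by linarith
qed

lemma r_insert_le: "r (insert x X) \<le> r X + 1"
proof -
  obtain D where D: "D \<subseteq> insert x X" "D \<in> I" "card D = r (insert x X)" using r_basis by blast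
  have "card (D - {x}) \<le> r X" by (rule r_le[OF _ down[OF D(2)]]) (use D(1) in auto)
  moreover have "card D \<le> card (D - {x}) + 1"
  proof -
    have fD: "finite D" using indep_fin[OF D(2)] .
    show ?thesis
    proof (cases "x \<in> D")
      case True
      show ?thesis using card_Suc_Diff1[OF fD True] by simp
    next
      case False
      then have "D - {x} = D" by simp
      then show ?thesis by simp
    qed
  qed
  ultimately show ?thesis using D by linarith
qed

lemma span_mono: "X \<subseteq> Y \<Longrightarrow> sp X \<subseteq> sp Y"
proof
  fix e assume XY: "X \<subseteq> Y" and e: "e \<in> sp X"
  then have eU: "e \<in> U" and re: "r (insert e X) = r X" by (auto simp: mspan_def)
  have s: "r (Y \<union> insert e X) + r (Y \<inter> insert e X) \<le> r Y + r (insert e X)" by (rule submod)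
  have "r X \<le> r (Y \<inter> insert e X)" using XY by (intro r_mono) auto
  moreover have eq: "Y \<union> insert e X = insert e Y" using XY by auto
  moreover have "r (insert e Y) + r (Y \<inter> insert e X) \<le> r Y + r X" using s re eq by simp
  ultimately have "r (insert e Y) \<le> r Y" by linarith
  moreover have "r Y \<le> r (insert e Y)" by (rule r_mono) auto
  ultimately show "e \<in> sp Y" using eU by (simp add: mspan_def)
qed

lemma in_span: "x \<in> X \<Longrightarrow> x \<in> U \<Longrightarrow> x \<in> sp X"
  by (simp add: mspan_def insert_absorb)

lemma closure: "finite X \<Longrightarrow> X \<subseteq> sp G \<Longrightarrow> r (G \<union> X) = r G"
proof (induction X rule: finite_induct)
  case empty then show ?case by simp
next
  case (insert x X)
  then have "x \<in> sp (G \<union> X)" using span_mono[of G "G \<union> X"] by blast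
  then have "r (insert x (G \<union> X)) = r (G \<union> X)" by (simp add: mspan_def)
  then show ?case using insert by simp
qed

lemma r_union_le: "finite L \<Longrightarrow> r (X \<union> L) \<le> r X + card L"
proof (induction L rule: finite_induct)
  case empty then show ?case by simp
next
  case (insert x L)
  have "r (X \<union> insert x L) = r (insert x (X \<union> L))" by simp
  also have "\<dots> \<le> r (X \<union> L) + 1" by (rule r_insert_le)
  finally show ?case using insert by simp
qed

lemma indep_over: assumes "finite X" "X \<subseteq> sp G" "finite L" "r (G \<union> L) = r G + card L"
  shows "r (X \<union> L) = r X + card L"
proof -
  have s: "r ((X \<union> L) \<union> (G \<union> X)) + r ((X \<union> L) \<inter> (G \<union> X)) \<le> r (X \<union> L) + r (G \<union> X)"
    by (rule submod)
  have "r (G \<union> X) = r G" by (rule closure[OF assms(1,2)])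
  moreover have "r (G \<union> L) \<le> r ((X \<union> L) \<union> (G \<union> X))" by (rule r_mono) auto
  moreover have "r X \<le> r ((X \<union> L) \<inter> (G \<union> X))" by (rule r_mono) auto
  ultimately have "r X + card L \<le> r (X \<union> L)" using s assms(4) by linarith
  moreover have "r (X \<union> L) \<le> r X + card L" by (rule r_union_le[OF assms(3)])
  ultimately show ?thesis by linarith
qed


end

lemma crit_D:
  assumes "critical_tuple Block Gd Bd" "i \<ge> j" "Block i \<noteq> {}" "Block j \<noteq> {}"
  shows "i \<in> Block i"
    "i > j \<Longrightarrow> Block i = Block j \<or> (\<forall>a\<in>Block i. \<forall>b\<in>Block j. a > b)"
    "Block i = Block j \<Longrightarrow> Gd i = Gd j \<and> Bd i = Bd j"
    "Block i \<union> Bd i \<subseteq> Gd i"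
    "(\<forall>a\<in>Block i. \<forall>b\<in>Block j. a > b) \<Longrightarrow> Bd i \<subseteq> Gd i \<and> Gd i \<subseteq> Bd j \<and> Bd j \<subseteq> Gd j"
proof -
  have A: "\<forall>i j. i \<ge> j \<and> Block i \<noteq> {} \<and> Block j \<noteq> {} \<longrightarrow>
       i \<in> Block i \<and>
       (i > j \<longrightarrow> Block i = Block j \<or> (\<forall>a\<in>Block i. \<forall>b\<in>Block j. a > b)) \<and>
       (Block i = Block j \<longrightarrow> Gd i = Gd j \<and> Bd i = Bd j) \<and>
       Block i \<union> Bd i \<subseteq> Gd i \<and>
       ((\<forall>a\<in>Block i. \<forall>b\<in>Block j. a > b) \<longrightarrow> Bd i \<subseteq> Gd i \<and> Gd i \<subseteq> Bd j \<and> Bd j \<subseteq> Gd j) \<and>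
       (\<forall>a\<in>Block i. \<forall>b\<in>Bd i. a < b)"
    using assms(1) unfolding critical_tuple_def .
  note H0 = spec[OF spec[OF A, of i], of j]
  have P: "i \<ge> j \<and> Block i \<noteq> {} \<and> Block j \<noteq> {}" using assms(2-4) by simp
  note H = mp[OF H0 P]
  note Ha = conjunct2[OF H]
  note Hb = conjunct2[OF Ha]
  note Hc = conjunct2[OF Hb]
  note Hd = conjunct2[OF Hc]
  show "i \<in> Block i" by (rule conjunct1[OF H])
  show "i > j \<Longrightarrow> Block i = Block j \<or> (\<forall>a\<in>Block i. \<forall>b\<in>Block j. a > b)" by (rule mp[OF conjunct1[OF Ha]])
  show "Block i = Block j \<Longrightarrow> Gd i = Gd j \<and> Bd i = Bd j" by (rule mp[OF conjunct1[OF Hb]])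
  show "Block i \<union> Bd i \<subseteq> Gd i" by (rule conjunct1[OF Hc])
  show "(\<forall>a\<in>Block i. \<forall>b\<in>Block j. a > b) \<Longrightarrow> Bd i \<subseteq> Gd i \<and> Gd i \<subseteq> Bd j \<and> Bd j \<subseteq> Gd j" by (rule mp[OF conjunct1[OF Hd]])
qed

lemma Bset_mono: "S \<subseteq> T \<Longrightarrow> Bset val X S \<subseteq> Bset val X T"
  unfolding Bset_def by blast

lemma lvl_pow: "val x = 2 powr (real_of_int j) \<Longrightarrow> lvl val x = j"
  unfolding lvl_def by simp

lemma powr_inj2: "(2::real) powr (real_of_int a) = 2 powr (real_of_int b) \<Longrightarrow> a = b"
  using powr_inj[of 2 "real_of_int a" "real_of_int b"] by simp


locale gapctx = mat U I for U :: "'a set" and I +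
  fixes F :: "'a set" and val :: "'a \<Rightarrow> real" and Block Gd Bd :: "int \<Rightarrow> int set" and i :: int
  assumes F: "F \<subseteq> U"
    and val_nonneg: "\<forall>x\<in>U. val x \<ge> 0"
    and val_pow: "\<forall>x\<in>U. val x > 0 \<longrightarrow> (\<exists>j::int. val x = 2 powr (real_of_int j))"
    and crit: "critical_tuple Block Gd Bd"
    and Blk: "Block i \<noteq> {}"
begin

abbreviation "G \<equiv> Bset val F (Gd i)"
abbreviation "Bb \<equiv> Bset val F (Bd i)"
abbreviation "Bblk \<equiv> Bset val (U - F) (Block i)"
definition "Lof P = P - Bblk - sp Bb"
definition "Inv P \<longleftrightarrow> P \<subseteq> U - F \<and> P \<inter> Bblk \<subseteq> sp G \<and> r (G \<union> Lof P) = r G + card (Lof P)"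

lemma finP: "P \<subseteq> U - F \<Longrightarrow> finite P" using finU finite_subset by blast

lemma Bb_G: "Bb \<subseteq> G"
proof -
  have "Block i \<union> Bd i \<subseteq> Gd i" by (rule crit_D(4)[OF crit order_refl Blk Blk])
  then have "Bd i \<subseteq> Gd i" by (rule subset_trans[OF Un_upper2])
  then show ?thesis by (rule Bset_mono)
qed

lemma G_sp: "G \<subseteq> sp G"
proof
  fix x assume "x \<in> G"
  then have "x \<in> F" unfolding Bset_def by simp
  then have "x \<in> U" using F by (rule subsetD[rotated])
  then show "x \<in> sp G" using \<open>x \<in> G\<close> in_span by simp
qed

lemma Inv_empty: "Inv {}"
proof -
  have "Lof {} = {}" unfolding Lof_def by simp
  then show ?thesis unfolding Inv_def by simp
qed

lemma Inv_step:
  assumes inv: "Inv P" and xU: "x \<in> U - F" and acc: "gap_accepts U I F val Block Gd Bd P x"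
  shows "Inv (insert x P)"
proof -
  define l where "l = lvl val x"
  have v0: "val x \<noteq> 0" and Bl: "Block l \<noteq> {}" and xs1: "x \<in> sp (Bset val F (Gd l))"
    and xs2: "x \<notin> sp (P \<union> Bset val F (Bd l))" using acc unfolding gap_accepts_def l_def by auto
  have "val x > 0" using v0 val_nonneg xU by force
  then obtain j where j: "val x = 2 powr (real_of_int j)" using val_pow xU by blast
  have lj: "l = j" using lvl_pow[of val x j, OF j] l_def by simp
  have lBl: "l \<in> Block l" using crit_D(1)[OF crit order_refl Bl Bl] .
  have PU: "P \<subseteq> U - F" and PB: "P \<inter> Bblk \<subseteq> sp G" and PL: "r (G \<union> Lof P) = r G + card (Lof P)"
    using inv unfolding Inv_def by auto
  have fin: "finite (Lof P)" using finP[OF PU] unfolding Lof_def by simp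
  have PU': "insert x P \<subseteq> U - F" using PU xU by blast
  show ?thesis
  proof (cases "l \<in> Block i")
    case True
    have xB: "x \<in> Bblk" using True xU j lj unfolding Bset_def by auto
    have BE: "Block l = Block i"
    proof (cases "l \<le> i")
      case True
      show ?thesis
      proof (cases "l = i")
        case False
        then have "l < i" using True by simp
        then have "Block i = Block l \<or> (\<forall>a\<in>Block i. \<forall>b\<in>Block l. a > b)"
          using crit_D(2)[OF crit _ Blk Bl] by simp
        then show ?thesis using lBl \<open>l \<in> Block i\<close> by force
      qed simp
    next
      case False
      then have "Block l = Block i \<or> (\<forall>a\<in>Block l. \<forall>b\<in>Block i. a > b)"
        using crit_D(2)[OF crit _ Bl Blk] by simp
      then show ?thesis using lBl \<open>l \<in> Block i\<close> by force
    qed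
    have "Gd l = Gd i"
    proof (cases "l \<le> i")
      case True then show ?thesis using crit_D(3)[OF crit True Blk Bl] BE by simp
    next
      case False then show ?thesis using crit_D(3)[OF crit _ Bl Blk] BE by simp
    qed
    then have "x \<in> sp G" using xs1 by simp
    moreover have "Lof (insert x P) = Lof P" using xB unfolding Lof_def by auto
    ultimately show ?thesis using PU' PB PL unfolding Inv_def by auto
  next
    case False
    have xnB: "x \<notin> Bblk" using False j unfolding Bset_def by (auto dest: powr_inj2 simp: lj)
    have lni: "l \<noteq> i" using False Blk crit_D(1)[OF crit order_refl Blk Blk] by auto
    have BN: "Block l \<noteq> Block i" using lBl False by auto
    have PB': "insert x P \<inter> Bblk \<subseteq> sp G" using PB xnB by auto
    show ?thesis
    proof (cases "l > i")
      case True
      then have sep: "\<forall>a\<in>Block l. \<forall>b\<in>Block i. a > b" using crit_D(2)[OF crit _ Bl Blk] BN by simp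
      then have "Gd l \<subseteq> Bd i" using crit_D(5)[OF crit _ Bl Blk] True by simp
      then have "x \<in> sp Bb" using xs1 span_mono[OF Bset_mono] by blast
      then have "Lof (insert x P) = Lof P" unfolding Lof_def by auto
      then show ?thesis using PU' PB' PL unfolding Inv_def by auto
    next
      case False
      then have li: "l < i" using lni by simp
      then have sep: "\<forall>a\<in>Block i. \<forall>b\<in>Block l. a > b" using crit_D(2)[OF crit _ Blk Bl] BN by simp
      then have GB: "Gd i \<subseteq> Bd l" using crit_D(5)[OF crit _ Blk Bl] li by simp
      have sub: "G \<union> Lof P \<subseteq> P \<union> Bset val F (Bd l)" using Bset_mono[OF GB, of val F] unfolding Lof_def by blast
      have xn: "x \<notin> sp (G \<union> Lof P)" using xs2 span_mono[OF sub] by blast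
      show ?thesis
      proof (cases "x \<in> sp Bb")
        case True
        then have "Lof (insert x P) = Lof P" unfolding Lof_def by auto
        then show ?thesis using PU' PB' PL unfolding Inv_def by auto
      next
        case False
        have L': "Lof (insert x P) = insert x (Lof P)" using False xnB unfolding Lof_def by auto
        have xL: "x \<notin> Lof P" using xn in_span xU by blast
        have "r (insert x (G \<union> Lof P)) \<noteq> r (G \<union> Lof P)" using xn xU unfolding mspan_def by auto
        moreover have "r (G \<union> Lof P) \<le> r (insert x (G \<union> Lof P))" by (rule r_mono) auto
        moreover have "r (insert x (G \<union> Lof P)) \<le> r (G \<union> Lof P) + 1" by (rule r_insert_le)
        ultimately have "r (G \<union> insert x (Lof P)) = r G + card (insert x (Lof P))"
          using PL xL fin by simp
        then show ?thesis using PU' PB' L' unfolding Inv_def by auto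
      qed
    qed
  qed
qed

lemma Inv_run: "set xs \<subseteq> U - F \<Longrightarrow> Inv P \<Longrightarrow> Inv (gap_run U I F val Block Gd Bd P xs)"
proof (induction xs arbitrary: P)
  case Nil then show ?case by simp
next
  case (Cons x xs)
  have xU: "x \<in> U - F" and xsU: "set xs \<subseteq> U - F" using Cons.prems(1) by auto
  have "Inv (if gap_accepts U I F val Block Gd Bd P x then insert x P else P)"
    using Inv_step[OF Cons.prems(2) xU] Cons.prems(2) by simp
  then have "Inv (gap_run U I F val Block Gd Bd (if gap_accepts U I F val Block Gd Bd P x then insert x P else P) xs)"
    by (rule Cons.IH[OF xsU])
  then show ?case by (simp only: gap_run.simps)
qed

lemma final:
  assumes inv: "Inv P" and e: "e \<in> sp G"
  shows "(e \<notin> sp (P \<union> Bb)) \<longleftrightarrow> (e \<notin> sp ((P \<inter> Bblk) \<union> Bb))"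
proof -
  have I3: "P \<subseteq> U - F \<and> P \<inter> Bblk \<subseteq> sp G \<and> r (G \<union> Lof P) = r G + card (Lof P)"
    using inv unfolding Inv_def .
  have PU: "P \<subseteq> U - F" using I3 by (rule conjunct1)
  have PB: "P \<inter> Bblk \<subseteq> sp G" using conjunct2[OF I3] by (rule conjunct1)
  have PL: "r (G \<union> Lof P) = r G + card (Lof P)" using conjunct2[OF I3] by (rule conjunct2)
  have eU: "e \<in> U" using e unfolding mspan_def by simp
  define A where "A = (P \<inter> Bblk) \<union> Bb"
  define H where "H = P \<inter> sp Bb"
  define L where "L = Lof P"
  have fP: "finite P" by (rule finP[OF PU])
  have fL: "finite L" using fP unfolding L_def Lof_def by simp
  have fBb: "finite Bb" using finite_subset[OF _ finU] F unfolding Bset_def by auto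
  have fA: "finite A" using fP fBb unfolding A_def by simp
  have fH: "finite H" using fP unfolding H_def by simp
  have BbG': "Bb \<subseteq> sp G" by (rule subset_trans[OF Bb_G G_sp])
  have AG: "A \<subseteq> sp G" unfolding A_def using PB BbG' by (rule Un_least)
  have HBb: "H \<subseteq> sp Bb" unfolding H_def by (rule Int_lower2)
  have HG: "H \<subseteq> sp G" by (rule subset_trans[OF HBb span_mono[OF Bb_G]])
  have BbA: "Bb \<subseteq> A" unfolding A_def by (rule Un_upper2)
  have HA: "H \<subseteq> sp A" by (rule subset_trans[OF HBb span_mono[OF BbA]])
  have BbeA: "Bb \<subseteq> insert e A" using BbA by (rule subset_insertI2)
  have HeA: "H \<subseteq> sp (insert e A)" by (rule subset_trans[OF HBb span_mono[OF BbeA]])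
  have eAG: "insert e A \<subseteq> sp G" using e AG by (rule insert_subsetI)
  have d1: "P \<union> Bb = (A \<union> H) \<union> L" unfolding A_def H_def L_def Lof_def by blast
  have d2: "insert e (P \<union> Bb) = (insert e A \<union> H) \<union> L" unfolding A_def H_def L_def Lof_def by blast
  have PL': "r (G \<union> L) = r G + card L" using PL unfolding L_def .
  have r1: "r (P \<union> Bb) = r A + card L"
  proof -
    have "r ((A \<union> H) \<union> L) = r (A \<union> H) + card L"
      by (rule indep_over[OF _ _ fL PL']) (use fA fH AG HG in auto)
    moreover have "r (A \<union> H) = r A" by (rule closure[OF fH HA])
    ultimately show ?thesis unfolding d1 by simp
  qed
  have r2: "r (insert e (P \<union> Bb)) = r (insert e A) + card L"
  proof -
    have "r ((insert e A \<union> H) \<union> L) = r (insert e A \<union> H) + card L"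
      by (rule indep_over[OF _ _ fL PL']) (use fA fH eAG HG in auto)
    moreover have "r (insert e A \<union> H) = r (insert e A)" by (rule closure[OF fH HeA])
    ultimately show ?thesis unfolding d2 by simp
  qed
  have "e \<in> sp (P \<union> Bb) \<longleftrightarrow> e \<in> sp A"
    unfolding mspan_def using eU r1 r2 by simp
  then show ?thesis unfolding A_def by simp
qed

end

theorem lemma2:
  fixes U F :: "'a set" and I :: "'a set set" and val :: "'a \<Rightarrow> real"
    and Block Gd Bd :: "int \<Rightarrow> int set" and \<sigma> :: "'a list" and k :: nat and i :: int and e :: 'a
  assumes M: "matroid U I"
    and F: "F \<subseteq> U"
    and val_nonneg: "\<forall>x\<in>U. val x \<ge> 0"
    and val_loop: "\<forall>x\<in>U. mrank I {x} = 0 \<longrightarrow> val x = 0"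
    and val_pow: "\<forall>x\<in>U. val x > 0 \<longrightarrow> (\<exists>j::int. val x = 2 powr (real_of_int j))"
    and crit: "critical_tuple Block Gd Bd"
    and order: "distinct \<sigma>" "set \<sigma> = U - F"
    and stage: "k \<le> length \<sigma>"
    and Blk: "Block i \<noteq> {}"
    and e: "e \<in> Bset val (U - F) (Block i) \<inter> mspan U I (Bset val F (Gd i))"
  shows "let P = gap_run U I F val Block Gd Bd {} (take k \<sigma>) in
     (e \<notin> mspan U I (P \<union> Bset val F (Bd i)) \<longleftrightarrow>
      e \<notin> mspan U I ((P \<inter> Bset val (U - F) (Block i)) \<union> Bset val F (Bd i)))"
proof -
  interpret gapctx U I F val Block Gd Bd i
  proof (unfold_locales)
    show "matroid U I" by (rule M)
    show "F \<subseteq> U" by (rule F)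
    show "\<forall>x\<in>U. val x \<ge> 0" by (rule val_nonneg)
    show "\<forall>x\<in>U. val x > 0 \<longrightarrow> (\<exists>j::int. val x = 2 powr (real_of_int j))" by (rule val_pow)
    show "critical_tuple Block Gd Bd" by (rule crit)
    show "Block i \<noteq> {}" by (rule Blk)
  qed
  have "set (take k \<sigma>) \<subseteq> U - F" unfolding order(2)[symmetric] by (rule set_take_subset)
  then have inv: "Inv (gap_run U I F val Block Gd Bd {} (take k \<sigma>))" by (rule Inv_run[OF _ Inv_empty])
  have eG: "e \<in> sp G" using e by (rule IntD2)
  show ?thesis unfolding Let_def by (rule final[OF inv eG])
qed

end
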